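(* Let $a$ and $b$ be positive integers. There exists a graph $G$ with $\gamma^{LD}(G)=a$ and $\gamma^{DLD}(G)=b$ if and only if $$0\le b-a\le 2^a-1-\binom{a}{\lceil a/2\rceil}.$$
   Context: Graphs are finite, simple and undirected, and need not be connected. For a vertex $u$, $N(u)$ is its set of neighbours and $N[u]=N(u)\cup\{u\}$. A code is a non-empty subset $C$ of the vertex set $V$; $I(C;u)=N[u]\cap C$. A code $C$ is locating-dominating if for all distinct $u,v\in V\setminus C$ we have $I(C;u)\neq\emptyset$ and $I(C;u)\ne I(C;v)$. A code $C$ is solid-locating-dominating if $I(C;u)\ne\emptyset$ for every $u\in V\setminus C$ and $I(C;u)\not\subseteq I(C;v)$ for all distinct $u,v\in V\setminus C$. $\gamma^{LD}(G)$ and $\gamma^{DLD}(G)$ are the minimum sizes of a locating-dominating and a solid-locating-dominating code in $G$. *)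

theory Defs
  imports Main
begin

definition simple_graph :: "'a set \<Rightarrow> ('a \<Rightarrow> 'a \<Rightarrow> bool) \<Rightarrow> bool" where
  "simple_graph V E \<longleftrightarrow> finite V \<and> (\<forall>u v. E u v \<longrightarrow> u \<in> V \<and> v \<in> V)
     \<and> (\<forall>u v. E u v \<longrightarrow> E v u) \<and> (\<forall>u. \<not> E u u)"

definition closed_nbhd :: "'a set \<Rightarrow> ('a \<Rightarrow> 'a \<Rightarrow> bool) \<Rightarrow> 'a \<Rightarrow> 'a set" where
  "closed_nbhd V E u = {v \<in> V. E u v} \<union> {u}"

definition I_set :: "'a set \<Rightarrow> ('a \<Rightarrow> 'a \<Rightarrow> bool) \<Rightarrow> 'a set \<Rightarrow> 'a \<Rightarrow> 'a set" where
  "I_set V E C u = closed_nbhd V E u \<inter> C"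

definition is_code :: "'a set \<Rightarrow> 'a set \<Rightarrow> bool" where
  "is_code V C \<longleftrightarrow> C \<subseteq> V \<and> C \<noteq> {}"

definition locating_dominating :: "'a set \<Rightarrow> ('a \<Rightarrow> 'a \<Rightarrow> bool) \<Rightarrow> 'a set \<Rightarrow> bool" where
  "locating_dominating V E C \<longleftrightarrow> is_code V C
     \<and> (\<forall>u \<in> V - C. I_set V E C u \<noteq> {})
     \<and> (\<forall>u \<in> V - C. \<forall>v \<in> V - C. u \<noteq> v \<longrightarrow> I_set V E C u \<noteq> I_set V E C v)"

definition solid_locating_dominating :: "'a set \<Rightarrow> ('a \<Rightarrow> 'a \<Rightarrow> bool) \<Rightarrow> 'a set \<Rightarrow> bool" where
  "solid_locating_dominating V E C \<longleftrightarrow> is_code V C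
     \<and> (\<forall>u \<in> V - C. I_set V E C u \<noteq> {})
     \<and> (\<forall>u \<in> V - C. \<forall>v \<in> V - C. u \<noteq> v \<longrightarrow> \<not> (I_set V E C u \<subseteq> I_set V E C v))"

definition gamma_LD :: "'a set \<Rightarrow> ('a \<Rightarrow> 'a \<Rightarrow> bool) \<Rightarrow> nat" where
  "gamma_LD V E = (LEAST k. \<exists>C. locating_dominating V E C \<and> card C = k)"

definition gamma_DLD :: "'a set \<Rightarrow> ('a \<Rightarrow> 'a \<Rightarrow> bool) \<Rightarrow> nat" where
  "gamma_DLD V E = (LEAST k. \<exists>C. solid_locating_dominating V E C \<and> card C = k)"

end

theory Submission imports Defs Complex_Main begin

lemma LYM:
  assumes "finite X" "\<A> \<subseteq> Pow X" "\<forall>A\<in>\<A>. \<forall>B\<in>\<A>. A \<subseteq> B \<longrightarrow> A = B"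
  shows "(\<Sum>A\<in>\<A>. fact (card A) * fact (card X - card A)) \<le> (fact (card X) :: nat)"
  using assms
proof (induction "card X" arbitrary: X \<A>)
  case 0
  then have "X = {}" by auto
  with 0 have "\<A> \<subseteq> {{}}" by auto
  then have "\<A> = {} \<or> \<A> = {{}}" by blast
  with \<open>X = {}\<close> show ?case by auto
next
  case (Suc m X \<A>)
  have finA: "finite \<A>" by (rule finite_subset[OF Suc.prems(2)]) (simp add: Suc.prems(1))
  show ?case
  proof (cases "X \<in> \<A>")
    case True
    then have "\<A> = {X}" using Suc.prems by blast
    then show ?thesis by simp
  next
    case False
    define h :: "'a set \<Rightarrow> nat" where "h A = fact (card A) * fact (m - card A)" for A
    have eq1: "fact (card A) * fact (card X - card A) = card (X - A) * h A" if "A \<in> \<A>" for A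
    proof -
      have sub: "A \<subset> X" using that False Suc.prems by blast
      then have "card A < card X" using psubset_card_mono[OF Suc.prems(1)] by blast
      moreover have "card (X - A) = card X - card A"
        using card_Diff_subset[OF finite_subset[OF psubset_imp_subset[OF sub] Suc.prems(1)] psubset_imp_subset[OF sub]] .
      ultimately have e: "card X - card A = Suc (m - card A)" "card (X - A) = Suc (m - card A)"
        using Suc.hyps(2) by auto
      show ?thesis unfolding h_def e(1) e(2) fact_Suc by (simp add: algebra_simps)
    qed
    have "(\<Sum>A\<in>\<A>. fact (card A) * fact (card X - card A)) = (\<Sum>A\<in>\<A>. card (X - A) * h A)"
      using eq1 by (rule sum.cong[OF refl])
    also have "\<dots> = (\<Sum>A\<in>\<A>. \<Sum>x\<in>X. if x \<notin> A then h A else 0)"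
    proof (rule sum.cong[OF refl])
      fix A assume "A \<in> \<A>"
      have "(\<Sum>x\<in>X. if x \<notin> A then h A else 0) = (\<Sum>x\<in>X - A. h A)"
        using Suc.prems(1) by (simp add: sum.If_cases Diff_eq Compl_eq)
      then show "card (X - A) * h A = (\<Sum>x\<in>X. if x \<notin> A then h A else 0)" by simp
    qed
    also have "\<dots> = (\<Sum>x\<in>X. \<Sum>A\<in>\<A>. if x \<notin> A then h A else 0)"
      by (rule sum.swap)
    also have "\<dots> = (\<Sum>x\<in>X. \<Sum>A\<in>{A\<in>\<A>. x \<notin> A}. h A)"
      using finA by (simp add: sum.inter_filter)
    also have "\<dots> \<le> (\<Sum>x\<in>X. fact m)"
    proof (rule sum_mono)
      fix x assume x: "x \<in> X"
      have cm: "m = card (X - {x})" using x Suc by simp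
      have "(\<Sum>A\<in>{A\<in>\<A>. x \<notin> A}. fact (card A) * fact (card (X - {x}) - card A)) \<le> (fact (card (X - {x})) :: nat)"

      proof (rule Suc.hyps(1)[OF cm])
        show "finite (X - {x})" using Suc.prems by simp
        show "{A \<in> \<A>. x \<notin> A} \<subseteq> Pow (X - {x})" using Suc.prems by auto
        show "\<forall>A\<in>{A \<in> \<A>. x \<notin> A}. \<forall>B\<in>{A \<in> \<A>. x \<notin> A}. A \<subseteq> B \<longrightarrow> A = B"
          using Suc.prems by auto
      qed
      then show "(\<Sum>A\<in>{A\<in>\<A>. x \<notin> A}. h A) \<le> fact m" using cm unfolding h_def by simp
    qed
    also have "\<dots> = fact (card X)" using Suc.hyps(2)[symmetric] by simp
    finally show ?thesis .
  qed
qed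

lemma sperner:
  assumes "finite X" "\<A> \<subseteq> Pow X" "\<forall>A\<in>\<A>. \<forall>B\<in>\<A>. A \<subseteq> B \<longrightarrow> A = B"
  shows "card \<A> \<le> card X choose (card X div 2)"
proof -
  let ?n = "card X" let ?M = "?n choose (?n div 2)"
  have finA: "finite \<A>" by (rule finite_subset[OF assms(2)]) (simp add: assms(1))
  have "card \<A> * fact ?n = (\<Sum>A\<in>\<A>. (fact ?n :: nat))" by simp
  also have "\<dots> \<le> (\<Sum>A\<in>\<A>. fact (card A) * fact (?n - card A) * ?M)"
  proof (rule sum_mono)
    fix A assume "A \<in> \<A>"
    then have "A \<subseteq> X" using assms(2) by blast
    then have "card A \<le> ?n" using assms(1) by (rule card_mono[rotated])
    then have "fact ?n = fact (card A) * fact (?n - card A) * (?n choose card A)"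
      by (simp add: binomial_fact_lemma)
    also have "\<dots> \<le> fact (card A) * fact (?n - card A) * ?M"
      by (intro mult_left_mono binomial_maximum) simp
    finally show "(fact ?n :: nat) \<le> fact (card A) * fact (?n - card A) * ?M" .
  qed
  also have "\<dots> = (\<Sum>A\<in>\<A>. fact (card A) * fact (?n - card A)) * ?M"
    by (simp add: sum_distrib_right)
  also have "\<dots> \<le> fact ?n * ?M" using LYM[OF assms] by simp
  finally have "card \<A> * fact ?n \<le> ?M * fact ?n" by simp
  then show ?thesis by simp
qed


lemma V_LD: "simple_graph V E \<Longrightarrow> V \<noteq> {} \<Longrightarrow> locating_dominating V E V"
  by (simp add: locating_dominating_def is_code_def)
lemma V_DLD: "simple_graph V E \<Longrightarrow> V \<noteq> {} \<Longrightarrow> solid_locating_dominating V E V"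
  by (simp add: solid_locating_dominating_def is_code_def)
lemma DLD_LD: "solid_locating_dominating V E C \<Longrightarrow> locating_dominating V E C"
  unfolding solid_locating_dominating_def locating_dominating_def by blast

lemma gamma_LD_eq:
  assumes "locating_dominating V E C" "card C = k"
    "\<And>D. locating_dominating V E D \<Longrightarrow> k \<le> card D"
  shows "gamma_LD V E = k"
  unfolding gamma_LD_def using assms by (intro Least_equality) auto
lemma gamma_DLD_eq:
  assumes "solid_locating_dominating V E C" "card C = k"
    "\<And>D. solid_locating_dominating V E D \<Longrightarrow> k \<le> card D"
  shows "gamma_DLD V E = k"
  unfolding gamma_DLD_def using assms by (intro Least_equality) auto

lemma gamma_LD_ex:
  assumes "simple_graph V E" "V \<noteq> {}"
  shows "\<exists>C. locating_dominating V E C \<and> card C = gamma_LD V E"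
proof -
  have "\<exists>k. \<exists>C. locating_dominating V E C \<and> card C = k" using V_LD[OF assms] by blast
  from LeastI_ex[OF this] show ?thesis unfolding gamma_LD_def .
qed
lemma gamma_DLD_ex:
  assumes "simple_graph V E" "V \<noteq> {}"
  shows "\<exists>C. solid_locating_dominating V E C \<and> card C = gamma_DLD V E"
proof -
  have "\<exists>k. \<exists>C. solid_locating_dominating V E C \<and> card C = k" using V_DLD[OF assms] by blast
  from LeastI_ex[OF this] show ?thesis unfolding gamma_DLD_def .
qed
lemma gamma_DLD_le:
  "solid_locating_dominating V E C \<Longrightarrow> gamma_DLD V E \<le> card C"
  unfolding gamma_DLD_def by (metis (mono_tags, lifting) Least_le)
lemma gamma_LD_le:
  "locating_dominating V E C \<Longrightarrow> gamma_LD V E \<le> card C"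
  unfolding gamma_LD_def by (metis (mono_tags, lifting) Least_le)

section \<open>Transfer along an injection\<close>

definition mapE :: "('a \<Rightarrow> 'b) \<Rightarrow> 'a set \<Rightarrow> ('a \<Rightarrow> 'a \<Rightarrow> bool) \<Rightarrow> 'b \<Rightarrow> 'b \<Rightarrow> bool" where
  "mapE f V E u v \<longleftrightarrow> (\<exists>x\<in>V. \<exists>y\<in>V. u = f x \<and> v = f y \<and> E x y)"

lemma map_simple:
  assumes "simple_graph V E" "inj_on f V"
  shows "simple_graph (f ` V) (mapE f V E)"
  using assms unfolding simple_graph_def mapE_def inj_on_def by blast

lemma map_nbhd:
  assumes "simple_graph V E" "inj_on f V" "u \<in> V"
  shows "closed_nbhd (f ` V) (mapE f V E) (f u) = f ` closed_nbhd V E u"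
  using assms unfolding simple_graph_def mapE_def inj_on_def closed_nbhd_def by blast

lemma map_I:
  assumes "simple_graph V E" "inj_on f V" "u \<in> V" "C \<subseteq> V"
  shows "I_set (f ` V) (mapE f V E) (f ` C) (f u) = f ` I_set V E C u"
proof -
  have "closed_nbhd V E u \<subseteq> V" using assms unfolding closed_nbhd_def by auto
  then show ?thesis unfolding I_set_def map_nbhd[OF assms(1-3)]
    using assms inj_on_image_Int by metis
qed

lemma map_LD:
  assumes "simple_graph V E" "inj_on f V" "C \<subseteq> V"
  shows "locating_dominating (f ` V) (mapE f V E) (f ` C) \<longleftrightarrow> locating_dominating V E C"
proof -
  have IV: "I_set V E C u \<subseteq> V" for u unfolding I_set_def using assms(3) by auto
  have D: "f ` V - f ` C = f ` (V - C)" using assms by (simp add: inj_on_image_set_diff)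
  show ?thesis unfolding locating_dominating_def is_code_def D
    using assms map_I[OF assms(1,2) _ assms(3)] inj_on_image_eq_iff[OF assms(2) IV IV]
    by (auto simp: inj_on_image_eq_iff inj_on_eq_iff)
qed

lemma inj_img_sub: "inj_on f V \<Longrightarrow> A \<subseteq> V \<Longrightarrow> B \<subseteq> V \<Longrightarrow> f ` A \<subseteq> f ` B \<longleftrightarrow> A \<subseteq> B"
  by (auto simp: inj_on_image_mem_iff) (meson inj_on_image_mem_iff subsetD image_eqI)

lemma map_DLD:
  assumes "simple_graph V E" "inj_on f V" "C \<subseteq> V"
  shows "solid_locating_dominating (f ` V) (mapE f V E) (f ` C) \<longleftrightarrow> solid_locating_dominating V E C"
proof -
  have IV: "I_set V E C u \<subseteq> V" for u unfolding I_set_def using assms(3) by auto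
  have D: "f ` V - f ` C = f ` (V - C)" using assms by (simp add: inj_on_image_set_diff)
  show ?thesis unfolding solid_locating_dominating_def is_code_def D
    using assms map_I[OF assms(1,2) _ assms(3)] inj_img_sub[OF assms(2) IV IV]
    by (auto simp: inj_img_sub inj_on_eq_iff)
qed

lemma map_gamma:
  assumes "simple_graph V E" "inj_on f V"
  shows "gamma_LD (f ` V) (mapE f V E) = gamma_LD V E"
    "gamma_DLD (f ` V) (mapE f V E) = gamma_DLD V E"
proof -
  have fin: "finite V" using assms unfolding simple_graph_def by auto
  have bk: "\<exists>C. C \<subseteq> V \<and> Cx = f ` C" if "Cx \<subseteq> f ` V" for Cx
    using that by (metis subset_image_iff)
  have cardeq: "card (f ` C) = card C" if "C \<subseteq> V" for C
    using that assms(2) by (meson card_image inj_on_subset)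
  have LDsub: "locating_dominating V E C \<Longrightarrow> C \<subseteq> V" for C unfolding locating_dominating_def is_code_def by auto
  have LDsub': "locating_dominating (f`V) (mapE f V E) C \<Longrightarrow> C \<subseteq> f`V" for C unfolding locating_dominating_def is_code_def by auto
  have DLDsub: "solid_locating_dominating V E C \<Longrightarrow> C \<subseteq> V" for C unfolding solid_locating_dominating_def is_code_def by auto
  have DLDsub': "solid_locating_dominating (f`V) (mapE f V E) C \<Longrightarrow> C \<subseteq> f`V" for C unfolding solid_locating_dominating_def is_code_def by auto
  have e1: "(\<lambda>k. \<exists>C. locating_dominating (f`V) (mapE f V E) C \<and> card C = k) = (\<lambda>k. \<exists>C. locating_dominating V E C \<and> card C = k)"
  proof (rule ext, rule iffI)
    fix k assume "\<exists>C. locating_dominating (f`V) (mapE f V E) C \<and> card C = k"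
    then obtain Cx where Cx: "locating_dominating (f`V) (mapE f V E) Cx" "card Cx = k" by blast
    obtain C where "C \<subseteq> V" "Cx = f ` C" using bk LDsub'[OF Cx(1)] by blast
    then show "\<exists>C. locating_dominating V E C \<and> card C = k" using Cx map_LD[OF assms] cardeq by metis
  next
    fix k assume "\<exists>C. locating_dominating V E C \<and> card C = k"
    then obtain C where C: "locating_dominating V E C" "card C = k" by blast
    then show "\<exists>C. locating_dominating (f`V) (mapE f V E) C \<and> card C = k"
      using map_LD[OF assms LDsub[OF C(1)]] cardeq[OF LDsub[OF C(1)]] by metis
  qed
  have e2: "(\<lambda>k. \<exists>C. solid_locating_dominating (f`V) (mapE f V E) C \<and> card C = k) = (\<lambda>k. \<exists>C. solid_locating_dominating V E C \<and> card C = k)"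
  proof (rule ext, rule iffI)
    fix k assume "\<exists>C. solid_locating_dominating (f`V) (mapE f V E) C \<and> card C = k"
    then obtain Cx where Cx: "solid_locating_dominating (f`V) (mapE f V E) Cx" "card Cx = k" by blast
    obtain C where "C \<subseteq> V" "Cx = f ` C" using bk DLDsub'[OF Cx(1)] by blast
    then show "\<exists>C. solid_locating_dominating V E C \<and> card C = k" using Cx map_DLD[OF assms] cardeq by metis
  next
    fix k assume "\<exists>C. solid_locating_dominating V E C \<and> card C = k"
    then obtain C where C: "solid_locating_dominating V E C" "card C = k" by blast
    then show "\<exists>C. solid_locating_dominating (f`V) (mapE f V E) C \<and> card C = k"
      using map_DLD[OF assms DLDsub[OF C(1)]] cardeq[OF DLDsub[OF C(1)]] by metis
  qed
  show "gamma_LD (f ` V) (mapE f V E) = gamma_LD V E" unfolding gamma_LD_def e1 ..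
  show "gamma_DLD (f ` V) (mapE f V E) = gamma_DLD V E" unfolding gamma_DLD_def e2 ..
qed

lemma to_nat_graph:
  fixes V :: "'a set"
  assumes "simple_graph V E" "V \<noteq> {}" "gamma_LD V E = a" "gamma_DLD V E = b"
  shows "\<exists>(V' :: nat set) E'. simple_graph V' E' \<and> V' \<noteq> {} \<and> gamma_LD V' E' = a \<and> gamma_DLD V' E' = b"
proof -
  have "finite V" using assms unfolding simple_graph_def by auto
  then obtain f :: "'a \<Rightarrow> nat" and n where f: "inj_on f V" using finite_imp_inj_to_nat_seg by blast
  show ?thesis
    apply (rule exI[of _ "f ` V"], rule exI[of _ "mapE f V E"])
    using map_simple[OF assms(1) f] map_gamma[OF assms(1) f] assms by auto
qed


lemma count_Q:
  assumes "finite C" "k \<ge> 1"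
  shows "card {S. S \<subseteq> C \<and> S \<noteq> {} \<and> card S \<noteq> k} + 1 + (card C choose k) = 2 ^ card C"
proof -
  let ?Q = "{S. S \<subseteq> C \<and> S \<noteq> {} \<and> card S \<noteq> k}"
  let ?L = "{S. S \<subseteq> C \<and> card S = k}"
  have P: "Pow C = (?Q \<union> {{}}) \<union> ?L" using assms by auto
  have fP: "finite (Pow C)" using assms by simp
  have "card (Pow C) = card (?Q \<union> {{}}) + card ?L"
    unfolding P apply (rule card_Un_disjoint)
    using fP P assms by (auto intro: finite_subset)
  also have "card (?Q \<union> {{}}) = card ?Q + 1"
    using fP P by (subst card_Un_disjoint) (auto intro: finite_subset)
  finally show ?thesis using n_subsets[OF assms(1)] card_Pow[OF assms(1)] by simp
qed

lemma necessity:
  assumes G: "simple_graph V E" "V \<noteq> {}"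
  shows "gamma_LD V E \<le> gamma_DLD V E"
    "gamma_DLD V E + 1 + (gamma_LD V E choose ((gamma_LD V E + 1) div 2)) \<le> gamma_LD V E + 2 ^ gamma_LD V E"
proof -
  obtain B where B: "solid_locating_dominating V E B" "card B = gamma_DLD V E" using gamma_DLD_ex[OF G] by blast
  show "gamma_LD V E \<le> gamma_DLD V E" using gamma_LD_le[OF DLD_LD[OF B(1)]] B(2) by simp
  obtain C where C: "locating_dominating V E C" "card C = gamma_LD V E" using gamma_LD_ex[OF G] by blast
  define a where "a = gamma_LD V E"
  define k where "k = (a + 1) div 2"
  have finV: "finite V" using G unfolding simple_graph_def by auto
  have CV: "C \<subseteq> V" "C \<noteq> {}" using C unfolding locating_dominating_def is_code_def by auto
  have finC: "finite C" using CV finV finite_subset by blast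
  have a1: "a \<ge> 1" using CV finC C(2) a_def by (metis One_nat_def Suc_leI card_gt_0_iff)
  have k1: "k \<ge> 1" using a1 k_def by simp
  define W where "W = {u \<in> V - C. card (I_set V E C u) \<noteq> k}"
  define D where "D = C \<union> W"
  let ?Q = "{S. S \<subseteq> C \<and> S \<noteq> {} \<and> card S \<noteq> k}"
  have Ldom: "\<And>u. u \<in> V - C \<Longrightarrow> I_set V E C u \<noteq> {}"
   and Lsep: "\<And>u v. u \<in> V - C \<Longrightarrow> v \<in> V - C \<Longrightarrow> u \<noteq> v \<Longrightarrow> I_set V E C u \<noteq> I_set V E C v"
    using C(1) unfolding locating_dominating_def by auto
  have ISC: "I_set V E C u \<subseteq> C" for u unfolding I_set_def by auto
  have "card W \<le> card ?Q"
  proof (rule card_inj_on_le)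
    show "inj_on (I_set V E C) W" unfolding inj_on_def W_def using Lsep by blast
    show "I_set V E C ` W \<subseteq> ?Q" unfolding W_def using Ldom ISC by auto
    show "finite ?Q" using finC by simp
  qed
  then have cW: "card W + 1 + (a choose k) \<le> 2 ^ a"
    using count_Q[OF finC k1] C(2) a_def by simp
  have finW: "finite W" unfolding W_def using finV by simp
  have cD: "card D \<le> a + card W" unfolding D_def using C(2) a_def card_Un_le by metis
  have IDC: "I_set V E D u \<inter> C = I_set V E C u" for u unfolding I_set_def D_def by auto
  have DLD: "solid_locating_dominating V E D"
    unfolding solid_locating_dominating_def is_code_def
  proof (intro conjI ballI impI)
    show "D \<subseteq> V" using CV unfolding D_def W_def by auto
    show "D \<noteq> {}" using CV unfolding D_def by auto
  next
    fix u assume u: "u \<in> V - D"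
    then have "u \<in> V - C" unfolding D_def by auto
    then show "I_set V E D u \<noteq> {}" using Ldom IDC by blast
  next
    fix u v assume u: "u \<in> V - D" and v: "v \<in> V - D" and uv: "u \<noteq> v"
    have uC: "u \<in> V - C" "card (I_set V E C u) = k" using u unfolding D_def W_def by auto
    have vC: "v \<in> V - C" "card (I_set V E C v) = k" using v unfolding D_def W_def by auto
    have ne: "I_set V E C u \<noteq> I_set V E C v" using Lsep uC vC uv by blast
    have fv: "finite (I_set V E C v)" using ISC finC finite_subset by blast
    have "\<not> I_set V E C u \<subseteq> I_set V E C v"
      using ne card_subset_eq[OF fv] uC(2) vC(2) by metis
    then show "\<not> I_set V E D u \<subseteq> I_set V E D v" using IDC by blast
  qed
  have "gamma_DLD V E \<le> card D" using gamma_DLD_le[OF DLD] .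
  then show "gamma_DLD V E + 1 + (gamma_LD V E choose ((gamma_LD V E + 1) div 2)) \<le> gamma_LD V E + 2 ^ gamma_LD V E"
    using cD cW unfolding a_def k_def by linarith
qed


definition hmid :: "nat \<Rightarrow> nat" where "hmid m = (if m = 0 then 0 else m choose (m div 2))"

lemma hmid_step: "hmid m + 1 \<le> hmid (Suc m)"
proof (cases "m = 0")
  case True then show ?thesis by (simp add: hmid_def)
next
  case False
  show ?thesis
  proof (cases "even m")
    case True
    then have e: "Suc m div 2 = m div 2" by presburger
    have j: "m div 2 \<ge> 1" using False True by presburger
    then obtain j' where "m div 2 = Suc j'" using not0_implies_Suc by fastforce
    then have "Suc m choose (Suc m div 2) = (m choose j') + (m choose (m div 2))" using e by simp
    moreover have "m choose j' \<ge> 1" using \<open>m div 2 = Suc j'\<close> by (simp add: Suc_leI)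
    ultimately show ?thesis using False by (simp add: hmid_def)
  next
    case odd: False
    then have e: "Suc m div 2 = Suc (m div 2)" by presburger
    then have "Suc m choose (Suc m div 2) = (m choose (m div 2)) + (m choose Suc (m div 2))" by simp
    moreover have "Suc (m div 2) \<le> m" using odd False by presburger
    then have "m choose Suc (m div 2) \<ge> 1" by (simp add: Suc_leI)
    ultimately show ?thesis using False by (simp add: hmid_def)
  qed
qed

lemma hmid_mono: "hmid r + d \<le> hmid (r + d)"
proof (induction d)
  case 0 then show ?case by simp
next
  case (Suc d) then show ?case using hmid_step[of "r + d"] by simp
qed

lemma hmid_bound: "r \<le> a \<Longrightarrow> (a - r) + hmid r \<le> hmid a"
  using hmid_mono[of r "a - r"] by simp

lemma antichain_nonempty_bound:
  assumes "finite R" "\<A> \<subseteq> Pow R" "{} \<notin> \<A>" "\<forall>A\<in>\<A>. \<forall>B\<in>\<A>. A \<subseteq> B \<longrightarrow> A = B"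
  shows "card \<A> \<le> hmid (card R)"
proof (cases "R = {}")
  case True then have "\<A> = {}" using assms by auto
  then show ?thesis by simp
next
  case False then show ?thesis using sperner[OF assms(1,2,4)] assms(1) by (simp add: hmid_def)
qed


definition GV :: "nat \<Rightarrow> nat set set \<Rightarrow> (nat + nat set) set" where
  "GV a F = Inl ` {..<a} \<union> Inr ` F"
definition GE :: "nat \<Rightarrow> nat set set \<Rightarrow> (nat + nat set) \<Rightarrow> (nat + nat set) \<Rightarrow> bool" where
  "GE a F x y \<longleftrightarrow> (\<exists>i S. i < a \<and> S \<in> F \<and> i \<in> S \<and> ((x = Inl i \<and> y = Inr S) \<or> (x = Inr S \<and> y = Inl i)))"

locale fam =
  fixes a :: nat and F :: "nat set set"
  assumes finF: "finite F"
    and subF: "\<And>S. S \<in> F \<Longrightarrow> S \<subseteq> {..<a} \<and> S \<noteq> {}"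
    and singF: "\<And>i. i < a \<Longrightarrow> {i} \<in> F"
begin

abbreviation "V \<equiv> GV a F"
abbreviation "E \<equiv> GE a F"

lemma simple: "simple_graph V E"
  unfolding simple_graph_def GV_def GE_def using finF by auto

lemma Vne: "a > 0 \<Longrightarrow> V \<noteq> {}" unfolding GV_def by auto

lemma nbhd_Inr: "S \<in> F \<Longrightarrow> closed_nbhd V E (Inr S) = {Inr S} \<union> Inl ` S"
  unfolding closed_nbhd_def GV_def GE_def using subF by fastforce

lemma nbhd_Inl: "i < a \<Longrightarrow> closed_nbhd V E (Inl i) = {Inl i} \<union> Inr ` {S\<in>F. i \<in> S}"
  unfolding closed_nbhd_def GV_def GE_def by fastforce

lemma I_Inr: "S \<in> F \<Longrightarrow> Inr S \<notin> D \<Longrightarrow> I_set V E D (Inr S) = Inl ` {i\<in>S. Inl i \<in> D}"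
  unfolding I_set_def nbhd_Inr by auto

lemma card_V: "card V = a + card F"
  unfolding GV_def by (subst card_Un_disjoint) (auto simp: finF card_image)

lemma dom_lower:
  assumes DV: "D \<subseteq> V" and dom: "\<forall>u\<in>V - D. I_set V E D u \<noteq> {}"
  shows "a \<le> card D"
proof -
  define h where "h i = (if Inl i \<in> D then Inl i else Inr {i})" for i :: nat
  have "card (h ` {..<a}) \<le> card D"
  proof (rule card_mono)
    show "finite D" using DV simple finite_subset unfolding simple_graph_def by blast
    show "h ` {..<a} \<subseteq> D"
    proof
      fix x assume "x \<in> h ` {..<a}"
      then obtain i where i: "i < a" "x = h i" by auto
      show "x \<in> D"
      proof (cases "Inl i \<in> D")
        case True then show ?thesis using i h_def by simp
      next
        case False
        show ?thesis
        proof (rule ccontr)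
          assume "x \<notin> D"
          then have nD: "Inr {i} \<notin> D" using i False h_def by simp
          have "Inr {i} \<in> V - D" using nD singF[OF i(1)] unfolding GV_def by auto
          then have "I_set V E D (Inr {i}) \<noteq> {}" using dom by blast
          then show False using I_Inr[OF singF[OF i(1)] nD] False by auto
        qed
      qed
    qed
  qed
  moreover have "inj_on h {..<a}" unfolding inj_on_def h_def by auto
  ultimately show ?thesis by (simp add: card_image)
qed

lemma I_C0: assumes S: "S \<in> F" shows "I_set V E (Inl ` {..<a}) (Inr S) = Inl ` S"
proof -
  have n: "Inr S \<notin> (Inl ` {..<a} :: (nat + nat set) set)" by auto
  have "{i\<in>S. (Inl i :: nat + nat set) \<in> Inl ` {..<a}} = S" using subF[OF S] by auto
  then show ?thesis using I_Inr[OF S n] by simp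
qed

lemma I_full: assumes S: "S \<in> F" and n: "Inr S \<notin> D" and sub: "Inl ` {..<a} \<subseteq> D"
  shows "I_set V E D (Inr S) = Inl ` S"
proof -
  have "{i\<in>S. Inl i \<in> D} = S" using subF[OF S] sub by auto
  then show ?thesis using I_Inr[OF S n] by simp
qed

lemma C0_LD: "a > 0 \<Longrightarrow> locating_dominating V E (Inl ` {..<a})"
  unfolding locating_dominating_def is_code_def
proof (intro conjI ballI impI)
  assume "a > 0"
  show "Inl ` {..<a} \<subseteq> V" unfolding GV_def by auto
  show "Inl ` {..<a} \<noteq> {}" using \<open>a > 0\<close> by auto
next
  fix u assume "u \<in> V - Inl ` {..<a}"
  then obtain S where S: "S \<in> F" "u = Inr S" unfolding GV_def by auto
  then show "I_set V E (Inl ` {..<a}) u \<noteq> {}" using I_C0[OF S(1)] subF[OF S(1)] by simp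
next
  fix u v assume u: "u \<in> V - Inl ` {..<a}" and v: "v \<in> V - Inl ` {..<a}" and uv: "u \<noteq> v"
  obtain S where S: "S \<in> F" "u = Inr S" using u unfolding GV_def by auto
  obtain T where T: "T \<in> F" "v = Inr T" using v unfolding GV_def by auto
  have "S \<noteq> T" using uv S T by auto
  then have "Inl ` S \<noteq> (Inl ` T :: (nat + nat set) set)" by (simp add: inj_image_eq_iff)
  then show "I_set V E (Inl ` {..<a}) u \<noteq> I_set V E (Inl ` {..<a}) v" using I_C0 S T by simp
qed

lemma gammaLD: "a > 0 \<Longrightarrow> gamma_LD V E = a"
proof (rule gamma_LD_eq[OF C0_LD])
  show "card (Inl ` {..<a}) = a" by (simp add: card_image)
  fix D assume "locating_dominating V E D"
  then show "a \<le> card D" using dom_lower unfolding locating_dominating_def is_code_def by blast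
qed

lemma DLD_facts:
  assumes "solid_locating_dominating V E D"
  shows "D \<subseteq> V" "\<And>u. u \<in> V - D \<Longrightarrow> I_set V E D u \<noteq> {}"
    "\<And>u v. u \<in> V - D \<Longrightarrow> v \<in> V - D \<Longrightarrow> u \<noteq> v \<Longrightarrow> \<not> I_set V E D u \<subseteq> I_set V E D v"
  using assms unfolding solid_locating_dominating_def is_code_def by auto

lemma DLD_lower_sperner:
  assumes D: "solid_locating_dominating V E D" and a0: "a > 0"
  shows "card (V - D) \<le> a choose (a div 2)"
proof -
  note Df = DLD_facts[OF D]
  define R where "R = {i. i < a \<and> Inl i \<in> D}"
  define Us where "Us = {S \<in> F. Inr S \<notin> D}"
  have VD: "V - D = Inl ` ({..<a} - R) \<union> Inr ` Us" unfolding GV_def R_def Us_def by auto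
  have finR: "finite R" unfolding R_def by simp
  have finUs: "finite Us" unfolding Us_def using finF by simp
  have IR: "I_set V E D (Inr S) = Inl ` (S \<inter> R)" if "S \<in> Us" for S
    using that I_Inr subF unfolding Us_def R_def by fastforce
  have UsV: "S \<in> Us \<Longrightarrow> Inr S \<in> V - D" for S unfolding Us_def GV_def by auto
  have sol: "\<not> S \<inter> R \<subseteq> T \<inter> R" if "S \<in> Us" "T \<in> Us" "S \<noteq> T" for S T
  proof
    assume "S \<inter> R \<subseteq> T \<inter> R"
    then have "I_set V E D (Inr S) \<subseteq> I_set V E D (Inr T)" using IR that by auto
    then show False using Df(3)[OF UsV[OF that(1)] UsV[OF that(2)]] that(3) by auto
  qed
  have ne: "S \<inter> R \<noteq> {}" if "S \<in> Us" for S using Df(2)[OF UsV[OF that]] IR[OF that] by auto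
  have inj: "inj_on (\<lambda>S. S \<inter> R) Us" unfolding inj_on_def using sol by blast
  have "card Us = card ((\<lambda>S. S \<inter> R) ` Us)" using inj by (simp add: card_image)
  also have "\<dots> \<le> hmid (card R)"
    apply (rule antichain_nonempty_bound[OF finR])
    using ne sol by blast+
  finally have cUs: "card Us \<le> hmid (card R)" .
  have "card (V - D) \<le> card (Inl ` ({..<a} - R) :: (nat + nat set) set) + card (Inr ` Us :: (nat + nat set) set)" unfolding VD by (rule card_Un_le)
  also have "\<dots> = (a - card R) + card Us"
  proof -
    have "R \<subseteq> {..<a}" unfolding R_def by auto
    then have "card ({..<a} - R) = a - card R" using finR by (simp add: card_Diff_subset)
    then show ?thesis by (simp add: card_image)
  qed
  also have "\<dots> \<le> (a - card R) + hmid (card R)" using cUs by simp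
  also have "\<dots> \<le> hmid a" by (rule hmid_bound) (simp add: R_def card_mono[of "{..<a}", simplified] subset_iff)
  finally show ?thesis using a0 by (simp add: hmid_def)
qed

end

context fam begin
lemma gammaDLD_exact:
  assumes "solid_locating_dominating V E D0" "card D0 = b"
    "\<And>D. solid_locating_dominating V E D \<Longrightarrow> card (V - D) + b \<le> card V"
  shows "gamma_DLD V E = b"
proof (rule gamma_DLD_eq[OF assms(1,2)])
  fix D assume D: "solid_locating_dominating V E D"
  have "D \<subseteq> V" using DLD_facts[OF D] by simp
  moreover have "finite V" using simple unfolding simple_graph_def by simp
  ultimately have "card (V - D) = card V - card D" "card D \<le> card V"
    by (auto simp: card_Diff_subset finite_subset card_mono)
  then show "b \<le> card D" using assms(3)[OF D] by linarith
qed
end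

lemma big_graph:
  assumes a3: "a \<ge> 3" and ta: "a \<le> t" and tb: "t + 1 + (a choose ((a + 1) div 2)) \<le> 2 ^ a"
  shows "\<exists>(V :: (nat + nat set) set) E. simple_graph V E \<and> V \<noteq> {} \<and> gamma_LD V E = a \<and> gamma_DLD V E = a + t"
proof -
  define k where "k = (a + 1) div 2"
  have k2: "k \<ge> 2" using a3 k_def by simp
  define A where "A = {..<a}"
  define Sing where "Sing = (\<lambda>i. {i}) ` A"
  define M where "M = {S. S \<subseteq> A \<and> card S = k}"
  define Rest where "Rest = {S. S \<subseteq> A \<and> card S \<ge> 2 \<and> card S \<noteq> k}"
  have finA: "finite A" unfolding A_def by simp
  have cA: "card A = a" unfolding A_def by simp
  have QS: "{S. S \<subseteq> A \<and> S \<noteq> {} \<and> card S \<noteq> k} = Sing \<union> Rest"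
  proof (rule set_eqI, rule iffI)
    fix S assume S: "S \<in> {S. S \<subseteq> A \<and> S \<noteq> {} \<and> card S \<noteq> k}"
    then have "finite S" using finA finite_subset by blast
    then have "card S \<ge> 1" using S by (simp add: Suc_leI card_gt_0_iff)
    show "S \<in> Sing \<union> Rest"
    proof (cases "card S = 1")
      case True then obtain i where "S = {i}" using card_1_singletonE by blast
      then show ?thesis using S unfolding Sing_def by auto
    next
      case False then show ?thesis using S \<open>card S \<ge> 1\<close> unfolding Rest_def by auto
    qed
  next
    fix S assume "S \<in> Sing \<union> Rest"
    then show "S \<in> {S. S \<subseteq> A \<and> S \<noteq> {} \<and> card S \<noteq> k}" using k2 unfolding Sing_def Rest_def by auto
  qed
  have disj1: "Sing \<inter> Rest = {}" unfolding Sing_def Rest_def by auto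
  have cSing: "card Sing = a" unfolding Sing_def using cA by (simp add: card_image inj_on_def)
  have finRest: "finite Rest" unfolding Rest_def using finA by simp
  have finSing: "finite Sing" unfolding Sing_def using finA by simp
  have "card (Sing \<union> Rest) + 1 + (a choose k) = 2 ^ a"
    using count_Q[OF finA, of k] k2 QS cA by simp
  then have cRest: "card Rest + a + 1 + (a choose k) = 2 ^ a"
    using card_Un_disjoint[OF finSing finRest disj1] cSing by simp
  then have "t - a \<le> card Rest" using tb k_def by simp
  then obtain X where X: "X \<subseteq> Rest" "card X = t - a" "finite X" by (meson obtain_subset_with_card_n)
  define F where "F = Sing \<union> M \<union> X"
  have finM: "finite M" unfolding M_def using finA by simp
  have cM: "card M = a choose k" unfolding M_def using n_subsets[OF finA] cA by simp
  have cF: "card F = t + (a choose k)"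
  proof -
    have d1: "Sing \<inter> M = {}" unfolding Sing_def M_def using k2 by auto
    have d2: "(Sing \<union> M) \<inter> X = {}" using X(1) unfolding Sing_def M_def Rest_def by auto
    have "card F = card (Sing \<union> M) + card X" unfolding F_def
      using card_Un_disjoint[OF _ X(3) d2] finSing finM by simp
    also have "card (Sing \<union> M) = a + (a choose k)" using card_Un_disjoint[OF finSing finM d1] cSing cM by simp
    finally show ?thesis using X(2) ta by simp
  qed
  interpret fam a F
  proof
    show "finite F" unfolding F_def using finSing finM X(3) by simp
    fix S assume "S \<in> F"
    then show "S \<subseteq> {..<a} \<and> S \<noteq> {}" unfolding F_def Sing_def M_def A_def using X(1) k2 unfolding Rest_def A_def by auto
  next
    fix i assume "i < a" then show "{i} \<in> F" unfolding F_def Sing_def A_def by auto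
  qed
  have a0: "a > 0" using a3 by simp
  define D0 where "D0 = Inl ` {..<a} \<union> Inr ` (F - M)"
  have MF: "M \<subseteq> F" unfolding F_def by auto
  have finF': "finite F" by (rule finF)
  have cD0: "card D0 = a + t"
  proof -
    have "card D0 = card (Inl ` {..<a} :: (nat + nat set) set) + card (Inr ` (F - M) :: (nat + nat set) set)"
      unfolding D0_def by (rule card_Un_disjoint) (use finF' in auto)
    also have "\<dots> = a + (card F - card M)" using MF finF' by (simp add: card_image card_Diff_subset finite_subset)
    finally show ?thesis using cF cM by simp
  qed
  have D0: "solid_locating_dominating V E D0"
    unfolding solid_locating_dominating_def is_code_def
  proof (intro conjI ballI impI)
    show "D0 \<subseteq> V" unfolding D0_def GV_def by auto
    show "D0 \<noteq> {}" unfolding D0_def using a0 by auto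
  next
    fix u assume "u \<in> V - D0"
    then obtain S where S: "S \<in> M" "u = Inr S" unfolding GV_def D0_def by auto
    then have SF: "S \<in> F" using MF by auto
    have "Inr S \<notin> D0" unfolding D0_def using S by auto
    have sub: "Inl ` {..<a} \<subseteq> D0" unfolding D0_def by blast
    then show "I_set V E D0 u \<noteq> {}" using I_full[OF SF \<open>Inr S \<notin> D0\<close> sub] subF[OF SF] S(2) by simp
  next
    fix u v assume u: "u \<in> V - D0" and v: "v \<in> V - D0" and uv: "u \<noteq> v"
    obtain S where S: "S \<in> M" "u = Inr S" using u unfolding GV_def D0_def by auto
    obtain T where T: "T \<in> M" "v = Inr T" using v unfolding GV_def D0_def by auto
    have SF: "S \<in> F" and TF: "T \<in> F" using S T MF by auto
    have nS: "Inr S \<notin> D0" and nT: "Inr T \<notin> D0" using u v S T by auto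
    have sub: "Inl ` {..<a} \<subseteq> D0" unfolding D0_def by blast
    have IS: "I_set V E D0 u = Inl ` S" using I_full[OF SF nS sub] S(2) by simp
    have IT: "I_set V E D0 v = Inl ` T" using I_full[OF TF nT sub] T(2) by simp
    have ST: "S \<noteq> T" using uv S T by auto
    have fT: "finite T" using T(1) finA unfolding M_def using finite_subset by blast
    have cST: "card S = card T" using S(1) T(1) unfolding M_def by simp
    have "\<not> S \<subseteq> T"
    proof
      assume "S \<subseteq> T" then have "S = T" using card_subset_eq[OF fT] cST by blast
      then show False using ST by simp
    qed
    then have "\<not> Inl ` S \<subseteq> (Inl ` T :: (nat + nat set) set)" by auto
    then show "\<not> I_set V E D0 u \<subseteq> I_set V E D0 v" unfolding IS IT .
  qed
  have "gamma_DLD V E = a + t"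
  proof (rule gammaDLD_exact[OF D0 cD0])
    fix D assume "solid_locating_dominating V E D"
    from DLD_lower_sperner[OF this a0] have "card (V - D) \<le> a choose (a div 2)" .
    moreover have "a choose (a div 2) = a choose k" unfolding k_def
    proof -
      have "a - a div 2 = (a + 1) div 2" by presburger
      then show "a choose (a div 2) = a choose ((a + 1) div 2)"
        using binomial_symmetric[of "a div 2" a] by simp
    qed
    ultimately show "card (V - D) + (a + t) \<le> card V" using card_V cF by simp
  qed
  then show ?thesis using simple Vne[OF a0] gammaLD[OF a0] by blast
qed


lemma chain_graph:
  assumes a0: "a > 0" and ta: "t < a"
  shows "\<exists>(V :: (nat + nat set) set) E. simple_graph V E \<and> V \<noteq> {} \<and> gamma_LD V E = a \<and> gamma_DLD V E = a + t"
proof -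
  define Sing where "Sing = (\<lambda>i. {i}) ` {..<a}"
  define Ch where "Ch = (\<lambda>j. {0..j}) ` {1..t}"
  define F where "F = Sing \<union> Ch"
  have Ch2: "S \<in> Ch \<Longrightarrow> card S \<ge> 2" for S unfolding Ch_def by auto
  have Chsub: "S \<in> Ch \<Longrightarrow> S \<subseteq> {..<a}" for S unfolding Ch_def using ta by auto
  have Chchain: "S \<in> Ch \<Longrightarrow> T \<in> Ch \<Longrightarrow> S \<subseteq> T \<or> T \<subseteq> S" for S T unfolding Ch_def by auto
  have Ch0: "S \<in> Ch \<Longrightarrow> S \<noteq> {}" for S unfolding Ch_def by auto
  have cSing: "card Sing = a" unfolding Sing_def by (simp add: card_image inj_on_def)
  have cCh: "card Ch = t" unfolding Ch_def by (subst card_image) (auto simp: inj_on_def)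
  have disj: "Sing \<inter> Ch = {}" unfolding Sing_def using Ch2 by fastforce
  have finSing: "finite Sing" and finCh: "finite Ch" unfolding Sing_def Ch_def by auto
  have cF: "card F = a + t" unfolding F_def using card_Un_disjoint[OF finSing finCh disj] cSing cCh by simp
  interpret fam a F
  proof
    show "finite F" unfolding F_def using finSing finCh by simp
    fix S assume "S \<in> F"
    then show "S \<subseteq> {..<a} \<and> S \<noteq> {}" unfolding F_def Sing_def using Chsub Ch0 by auto
  next
    fix i assume "i < a" then show "{i} \<in> F" unfolding F_def Sing_def by auto
  qed
  define D0 where "D0 = Inl ` {..<a} \<union> Inr ` Ch"
  have finF': "finite F" by (rule finF)
  have cD0: "card D0 = a + t"
  proof -
    have "card D0 = card (Inl ` {..<a} :: (nat + nat set) set) + card (Inr ` Ch :: (nat + nat set) set)"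
      unfolding D0_def by (rule card_Un_disjoint) (use finCh in auto)
    then show ?thesis using cCh by (simp add: card_image)
  qed
  have ChF: "Ch \<subseteq> F" "Sing \<subseteq> F" unfolding F_def by auto
  have D0: "solid_locating_dominating V E D0"
    unfolding solid_locating_dominating_def is_code_def
  proof (intro conjI ballI impI)
    show "D0 \<subseteq> V" unfolding D0_def GV_def F_def by auto
    show "D0 \<noteq> {}" unfolding D0_def using a0 by auto
  next
    fix u assume "u \<in> V - D0"
    then obtain i where i: "i < a" "u = Inr {i}" unfolding GV_def D0_def F_def Sing_def by auto
    have "Inr {i} \<notin> D0" unfolding D0_def using i disj unfolding Sing_def by auto
    then show "I_set V E D0 u \<noteq> {}" using I_Inr[OF singF[OF i(1)]] i unfolding D0_def by auto
  next
    fix u v assume u: "u \<in> V - D0" and v: "v \<in> V - D0" and uv: "u \<noteq> v"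
    obtain i where i: "i < a" "u = Inr {i}" using u unfolding GV_def D0_def F_def Sing_def by auto
    obtain j where j: "j < a" "v = Inr {j}" using v unfolding GV_def D0_def F_def Sing_def by auto
    have "Inr {i} \<notin> D0" "Inr {j} \<notin> D0" using u v i j by auto
    then have "I_set V E D0 u = {Inl i}" "I_set V E D0 v = {Inl j}"
      using I_Inr[OF singF[OF i(1)]] I_Inr[OF singF[OF j(1)]] i j unfolding D0_def by auto
    then show "\<not> I_set V E D0 u \<subseteq> I_set V E D0 v" using uv i j by auto
  qed
  have "gamma_DLD V E = a + t"
  proof (rule gammaDLD_exact[OF D0 cD0])
    fix D assume D: "solid_locating_dominating V E D"
    note Df = DLD_facts[OF D]
    define P where "P x i \<longleftrightarrow> (x = Inl i \<and> Inr {i} \<in> D) \<or> (x = Inr {i} \<and> Inl i \<in> D)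
        \<or> (\<exists>S\<in>Ch. x = Inr S \<and> Inl i \<in> D \<and> Inr {i} \<in> D)" for x i
    have uniq: "S = T" if "S \<in> Ch" "T \<in> Ch" "Inr S \<notin> D" "Inr T \<notin> D" for S T
    proof (rule ccontr)
      assume ne: "S \<noteq> T"
      have SV: "Inr S \<in> V - D" and TV: "Inr T \<in> V - D" using that ChF unfolding GV_def by auto
      have IS: "I_set V E D (Inr S) = Inl ` {i\<in>S. Inl i \<in> D}" using I_Inr that ChF by auto
      have IT: "I_set V E D (Inr T) = Inl ` {i\<in>T. Inl i \<in> D}" using I_Inr that ChF by auto
      from Chchain[OF that(1,2)] show False
      proof
        assume "S \<subseteq> T"
        then have "I_set V E D (Inr S) \<subseteq> I_set V E D (Inr T)" unfolding IS IT by auto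
        then show False using Df(3)[OF SV TV] ne by auto
      next
        assume "T \<subseteq> S"
        then have "I_set V E D (Inr T) \<subseteq> I_set V E D (Inr S)" unfolding IS IT by auto
        then show False using Df(3)[OF TV SV] ne by auto
      qed
    qed
    have ex: "\<exists>i<a. P x i" if x: "x \<in> V - D" for x
    proof -
      consider (L) i where "i < a" "x = Inl i" | (R) S where "S \<in> F" "x = Inr S" using x unfolding GV_def by auto
      then show ?thesis
      proof cases
        case L
        have "Inr {i} \<in> D"
        proof (rule ccontr)
          assume nD: "Inr {i} \<notin> D"
          then have "Inr {i} \<in> V - D" using singF[OF L(1)] unfolding GV_def by auto
          then have "I_set V E D (Inr {i}) \<noteq> {}" using Df(2) by blast
          then show False using I_Inr[OF singF[OF L(1)] nD] L x by auto
        qed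
        then show ?thesis using L unfolding P_def by auto
      next
        case R
        have nD: "Inr S \<notin> D" using x R by auto
        have IS: "I_set V E D (Inr S) = Inl ` {i\<in>S. Inl i \<in> D}" using I_Inr[OF R(1) nD] .
        have "I_set V E D (Inr S) \<noteq> {}" using Df(2) x R by auto
        then obtain i where i: "i \<in> S" "Inl i \<in> D" unfolding IS by auto
        have ia: "i < a" using i subF[OF R(1)] by auto
        show ?thesis
        proof (cases "S \<in> Sing")
          case True
          then have "S = {i}" using i unfolding Sing_def by auto
          then show ?thesis using ia i R unfolding P_def by auto
        next
          case False
          then have SCh: "S \<in> Ch" using R unfolding F_def by auto
          have "Inr {i} \<in> D"
          proof (rule ccontr)
            assume nDi: "Inr {i} \<notin> D"
            have iV: "Inr {i} \<in> V - D" using singF[OF ia] nDi unfolding GV_def by auto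
            have "I_set V E D (Inr {i}) = {Inl i}" using I_Inr[OF singF[OF ia] nDi] i by auto
            then have "I_set V E D (Inr {i}) \<subseteq> I_set V E D (Inr S)" unfolding IS using i by auto
            moreover have "Inr {i} \<noteq> (Inr S :: nat + nat set)" using Ch2[OF SCh] by auto
            ultimately show False using Df(3)[OF iV x[unfolded R(2)]] by auto
          qed
          then show ?thesis using ia i R SCh unfolding P_def by auto
        qed
      qed
    qed
    define g where "g x = (SOME i. i < a \<and> P x i)" for x
    have g: "g x < a \<and> P x (g x)" if "x \<in> V - D" for x
      unfolding g_def using someI_ex[OF ex[OF that]] by simp
    have "card (V - D) \<le> card {..<a}"
    proof (rule card_inj_on_le)
      show "g ` (V - D) \<subseteq> {..<a}" using g by auto
      show "finite {..<a}" by simp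
      show "inj_on g (V - D)"
      proof (rule inj_onI)
        fix x y assume x: "x \<in> V - D" and y: "y \<in> V - D" and gxy: "g x = g y"
        have Px: "P x (g x)" and Py: "P y (g x)" using g[OF x] g[OF y] gxy by auto
        let ?i = "g x"
        have nx: "x \<notin> D" and ny: "y \<notin> D" using x y by auto
        have Px': "(x = Inl ?i \<and> Inr {?i} \<in> D) \<or> (x = Inr {?i} \<and> Inl ?i \<in> D)
          \<or> (\<exists>S\<in>Ch. x = Inr S \<and> Inl ?i \<in> D \<and> Inr {?i} \<in> D)" using Px unfolding P_def .
        have Py': "(y = Inl ?i \<and> Inr {?i} \<in> D) \<or> (y = Inr {?i} \<and> Inl ?i \<in> D)
          \<or> (\<exists>S\<in>Ch. y = Inr S \<and> Inl ?i \<in> D \<and> Inr {?i} \<in> D)" using Py unfolding P_def .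
        from Px' show "x = y"
        proof (elim disjE conjE bexE)
          assume "x = Inl ?i" "Inr {?i} \<in> D" then show ?thesis using Py' nx ny by auto
        next
          assume "x = Inr {?i}" "Inl ?i \<in> D" then show ?thesis using Py' nx ny by auto
        next
          fix S assume S: "S \<in> Ch" "x = Inr S" "Inl ?i \<in> D" "Inr {?i} \<in> D"
          from Py' show ?thesis
          proof (elim disjE conjE bexE)
            fix T assume T: "T \<in> Ch" "y = Inr T"
            then show ?thesis using uniq[OF S(1) T(1)] S nx ny by auto
          qed (use S nx ny in auto)
        qed
      qed
    qed
    then show "card (V - D) + (a + t) \<le> card V" using card_V cF by simp
  qed
  then show ?thesis using simple Vne[OF a0] gammaLD[OF a0] by blast
qed


theorem mainTheorem20:
  fixes a b :: nat
  assumes "a > 0" and "b > 0"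
  shows "(\<exists>(V :: nat set) E. simple_graph V E \<and> V \<noteq> {} \<and>
             gamma_LD V E = a \<and> gamma_DLD V E = b)
         \<longleftrightarrow> (0 \<le> int b - int a \<and>
              int b - int a \<le> 2 ^ a - 1 - int (a choose ((a + 1) div 2)))"
proof
  assume "\<exists>(V :: nat set) E. simple_graph V E \<and> V \<noteq> {} \<and> gamma_LD V E = a \<and> gamma_DLD V E = b"
  then obtain V :: "nat set" and E where G: "simple_graph V E" "V \<noteq> {}" "gamma_LD V E = a" "gamma_DLD V E = b" by blast
  from necessity[OF G(1,2)] G(3,4) have h: "a \<le> b" "b + 1 + (a choose ((a + 1) div 2)) \<le> a + 2 ^ a" by auto
  have "int (b + 1 + (a choose ((a + 1) div 2))) \<le> int (a + 2 ^ a)" using h(2) by linarith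
  then have "int b + 1 + int (a choose ((a + 1) div 2)) \<le> int a + 2 ^ a" by simp
  then show "0 \<le> int b - int a \<and> int b - int a \<le> 2 ^ a - 1 - int (a choose ((a + 1) div 2))"
    using h(1) by linarith
next
  assume h: "0 \<le> int b - int a \<and> int b - int a \<le> 2 ^ a - 1 - int (a choose ((a + 1) div 2))"
  define t where "t = b - a"
  have ab: "a \<le> b" using h by linarith
  have "int b + 1 + int (a choose ((a + 1) div 2)) \<le> int a + 2 ^ a" using h by linarith
  then have "int (b + 1 + (a choose ((a + 1) div 2))) \<le> int (a + 2 ^ a)" by simp
  then have tb: "t + 1 + (a choose ((a + 1) div 2)) \<le> 2 ^ a" using ab unfolding t_def by linarith
  have bt: "b = a + t" using ab t_def by simp
  have "\<exists>(V :: (nat + nat set) set) E. simple_graph V E \<and> V \<noteq> {} \<and> gamma_LD V E = a \<and> gamma_DLD V E = a + t"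
  proof (cases "t < a")
    case True then show ?thesis using chain_graph[OF assms(1)] by blast
  next
    case False
    have "a \<noteq> 1"
    proof
      assume "a = 1" then show False using tb False by simp
    qed
    moreover have "a \<noteq> 2"
    proof
      assume a2: "a = 2"
      have "(a + 1) div 2 = 1" using a2 by simp
      moreover have "a choose 1 = 2" using a2 by simp
      ultimately have "t + 1 + 2 \<le> 2 ^ 2" using tb a2 by simp
      then show False using False a2 by simp
    qed
    ultimately have "a \<ge> 3" using assms(1) by linarith
    moreover have "a \<le> t" using False by simp
    ultimately show ?thesis using big_graph[OF _ _ tb] by blast
  qed
  then obtain V :: "(nat + nat set) set" and E where G: "simple_graph V E" "V \<noteq> {}" "gamma_LD V E = a" "gamma_DLD V E = a + t" by blast
  show "\<exists>(V :: nat set) E. simple_graph V E \<and> V \<noteq> {} \<and> gamma_LD V E = a \<and> gamma_DLD V E = b"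
    using to_nat_graph[OF G] unfolding bt[symmetric] .
qed

end
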